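(* For every integer $n \ge 5$, $\gamma_R(P(n,2)) \ge \left\lceil \frac{8n}{7}\right\rceil$.
   Context: For integers $n \ge 3$ and $1 \le k < n/2$, the generalized Petersen graph $P(n,k)$ has vertex set $\{v_i, u_i : 0 \le i \le n-1\}$ and edge set $\{v_iv_{i+1},\ v_iu_i,\ u_iu_{i+k} : 0 \le i \le n-1\}$, with subscripts taken modulo $n$. A Roman domination function (RDF) of a graph $G$ is a function $f: V(G)\to\{0,1,2\}$ such that every vertex $u$ with $f(u)=0$ is adjacent to at least one vertex $v$ with $f(v)=2$. Its weight is $\sum_{u\in V(G)} f(u)$. The Roman domination number $\gamma_R(G)$ is the minimum weight of an RDF of $G$. *)

theory Defs
  imports Complex_Main
begin

text \<open>Vertices of the generalized Petersen graph P(n,k): outer vertices v_i and inner vertices u_i,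
  with indices i in {0..<n}.\<close>
datatype gp_vertex = V nat | U nat

definition gp_vertices :: "nat \<Rightarrow> gp_vertex set" where
  "gp_vertices n = V ` {0..<n} \<union> U ` {0..<n}"

definition gp_edges :: "nat \<Rightarrow> nat \<Rightarrow> (gp_vertex \<times> gp_vertex) set" where
  "gp_edges n k = (\<Union>i\<in>{0..<n}. {(V i, V ((i + 1) mod n)), (V i, U i), (U i, U ((i + k) mod n))})"

definition gp_adj :: "nat \<Rightarrow> nat \<Rightarrow> gp_vertex \<Rightarrow> gp_vertex \<Rightarrow> bool" where
  "gp_adj n k x y \<longleftrightarrow> (x, y) \<in> gp_edges n k \<or> (y, x) \<in> gp_edges n k"

text \<open>Roman domination function on a graph with vertex set VS and adjacency relation adj.
  Values are taken in {0,1,2}; outside VS the function is irrelevant and fixed to 0.\<close>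
definition is_rdf :: "'a set \<Rightarrow> ('a \<Rightarrow> 'a \<Rightarrow> bool) \<Rightarrow> ('a \<Rightarrow> nat) \<Rightarrow> bool" where
  "is_rdf VS adj f \<longleftrightarrow>
     (\<forall>x\<in>VS. f x \<le> 2) \<and> (\<forall>x. x \<notin> VS \<longrightarrow> f x = 0) \<and>
     (\<forall>x\<in>VS. f x = 0 \<longrightarrow> (\<exists>y\<in>VS. adj x y \<and> f y = 2))"

definition rdf_weight :: "'a set \<Rightarrow> ('a \<Rightarrow> nat) \<Rightarrow> nat" where
  "rdf_weight VS f = (\<Sum>x\<in>VS. f x)"

definition roman_domination_number :: "'a set \<Rightarrow> ('a \<Rightarrow> 'a \<Rightarrow> bool) \<Rightarrow> nat" where
  "roman_domination_number VS adj = (LEAST w. \<exists>f. is_rdf VS adj f \<and> rdf_weight VS f = w)"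

definition gamma_R_GP :: "nat \<Rightarrow> nat \<Rightarrow> nat" where
  "gamma_R_GP n k = roman_domination_number (gp_vertices n) (gp_adj n k)"

end

theory Submission
  imports Defs
begin

definition psi :: "nat \<Rightarrow> nat \<Rightarrow> nat \<Rightarrow> int" where
  "psi x y z = (if x = 0 then (if y = 0 then (if z = 0 then -26 else if z = 1 then -19 else 0) else if y = 1 then (if z = 0 then -19 else if z = 1 then -12 else -13) else (if z = 0 then 0 else if z = 1 then -13 else -6))
   else if x = 1 then (if y = 0 then (if z = 0 then -19 else if z = 1 then -18 else 0) else if y = 1 then (if z = 0 then -16 else if z = 1 then -11 else -10) else (if z = 0 then 0 else if z = 1 then -7 else 0))
   else (if y = 0 then (if z = 0 then -15 else if z = 1 then -8 else 0) else if y = 1 then (if z = 0 then -15 else if z = 1 then -8 else -1) else (if z = 0 then 0 else if z = 1 then -7 else 0)))"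

definition stat :: "nat \<Rightarrow> bool \<Rightarrow> nat" where
  "stat x d = (if x = 2 then 2 else if x \<ge> 1 \<or> d then 1 else 0)"

lemma stat_le: "stat x d \<le> 2" by (simp add: stat_def)

lemma all_step:
  "\<forall>s1\<in>{0,1,2::nat}. \<forall>s0\<in>{0,1,2::nat}. \<forall>sv\<in>{0,1,2::nat}. \<forall>a\<in>{0,1,2::nat}. \<forall>b\<in>{0,1,2::nat}.
    (sv \<ge> 1 \<or> a = 2) \<longrightarrow> (s1 \<ge> 1 \<or> b = 2) \<longrightarrow>
    psi s0 (stat b (a = 2 \<or> s1 = 2)) (stat a (b = 2 \<or> sv = 2)) - psi s1 s0 sv
           \<le> 7 * (int a + int b) - 8"
  by (simp add: psi_def stat_def)

lemma finite_step:
  assumes "s1 \<le> 2" "s0 \<le> 2" "sv \<le> 2" "a \<le> 2" "b \<le> 2"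
    and "sv \<ge> 1 \<or> a = 2" and "s1 \<ge> 1 \<or> b = 2"
  shows "psi s0 (stat b (a = 2 \<or> s1 = 2)) (stat a (b = 2 \<or> sv = 2)) - psi s1 s0 sv
           \<le> 7 * (int a + int b) - 8"
proof -
  have e: "\<And>x::nat. x \<le> 2 \<Longrightarrow> x \<in> {0,1,2}" by auto
  show ?thesis
    by (rule all_step[rule_format, OF e[OF assms(1)] e[OF assms(2)] e[OF assms(3)] e[OF assms(4)] e[OF assms(5)] assms(6) assms(7)])
qed

lemma stat_eq2: "stat x d = 2 \<longleftrightarrow> x = 2" by (simp add: stat_def)
lemma stat_ge1: "x \<le> 2 \<Longrightarrow> stat x d \<ge> 1 \<longleftrightarrow> x \<ge> 1 \<or> d" by (auto simp: stat_def)

lemma adjV: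
  assumes "gp_adj n k (V i) y" "i < n"
  shows "y = V ((i+1) mod n) \<or> y = U i \<or> (\<exists>m<n. y = V m \<and> (m+1) mod n = i)"
  using assms by (auto simp: gp_adj_def gp_edges_def)

lemma adjU:
  assumes "gp_adj n k (U i) y" "i < n"
  shows "y = U ((i+k) mod n) \<or> y = V i \<or> (\<exists>m<n. y = U m \<and> (m+k) mod n = i)"
  using assms by (auto simp: gp_adj_def gp_edges_def)

lemma mod_cancel_aux:
  fixes m j c n :: nat
  assumes "m < n" "(m + c) mod n = (j + c) mod n"
  shows "m = j mod n"
proof -
  have "(int m + int c) mod int n = (int j + int c) mod int n"
    using assms(2) by (metis of_nat_add of_nat_mod)
  hence "int n dvd (int m + int c) - (int j + int c)" by (simp only: mod_eq_dvd_iff)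
  hence "int n dvd int m - int j" by simp
  hence "int m mod int n = int j mod int n" by (simp only: mod_eq_dvd_iff)
  hence "m mod n = j mod n" by (metis of_nat_mod of_nat_eq_iff)
  thus ?thesis using assms(1) by simp
qed

lemma domV:
  assumes rdf: "is_rdf (gp_vertices n) (gp_adj n 2) f" and n: "n > 0"
  shows "f (V ((j+1) mod n)) \<ge> 1 \<or> f (U ((j+1) mod n)) = 2 \<or> f (V (j mod n)) = 2 \<or> f (V ((j+2) mod n)) = 2"
proof (cases "f (V ((j+1) mod n)) = 0")
  case True
  have "V ((j+1) mod n) \<in> gp_vertices n" using n by (simp add: gp_vertices_def)
  with True rdf obtain y where y: "gp_adj n 2 (V ((j+1) mod n)) y" "f y = 2"
    unfolding is_rdf_def by blast
  from adjV[OF y(1)] n have "y = V (((j+1) mod n + 1) mod n) \<or> y = U ((j+1) mod n) \<or> (\<exists>m<n. y = V m \<and> (m+1) mod n = (j+1) mod n)"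
    by simp
  moreover have "((j+1) mod n + 1) mod n = (j+2) mod n" by (simp add: mod_Suc_eq)
  ultimately have "y = V ((j+2) mod n) \<or> y = U ((j+1) mod n) \<or> y = V (j mod n)"
    using mod_cancel_aux by metis
  with y(2) show ?thesis by auto
qed auto

lemma domU:
  assumes rdf: "is_rdf (gp_vertices n) (gp_adj n 2) f" and n: "n > 0"
  shows "f (U ((j+2) mod n)) \<ge> 1 \<or> f (V ((j+2) mod n)) = 2 \<or> f (U (j mod n)) = 2 \<or> f (U ((j+4) mod n)) = 2"
proof (cases "f (U ((j+2) mod n)) = 0")
  case True
  have "U ((j+2) mod n) \<in> gp_vertices n" using n by (simp add: gp_vertices_def)
  with True rdf obtain y where y: "gp_adj n 2 (U ((j+2) mod n)) y" "f y = 2"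
    unfolding is_rdf_def by blast
  from adjU[OF y(1)] n have "y = U (((j+2) mod n + 2) mod n) \<or> y = V ((j+2) mod n) \<or> (\<exists>m<n. y = U m \<and> (m+2) mod n = (j+2) mod n)"
    by simp
  moreover have "((j+2) mod n + 2) mod n = (j+4) mod n" by (metis mod_add_left_eq add.assoc numeral_plus_numeral semiring_norm(2) semiring_norm(6))
  ultimately have "y = U ((j+4) mod n) \<or> y = V ((j+2) mod n) \<or> y = U (j mod n)"
    using mod_cancel_aux by metis
  with y(2) show ?thesis by auto
qed auto

lemma shift_sum:
  fixes A :: "nat \<Rightarrow> int"
  assumes per: "\<And>j. A (j + n) = A j"
  shows "(\<Sum>j<n. A (j + k)) = (\<Sum>j<n. A j)"
proof (induction k)
  case (Suc k)
  have "(\<Sum>j<n. A (Suc j + k) - A (j + k)) = A (n + k) - A (0 + k)"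
    by (rule sum_lessThan_telescope)
  also have "\<dots> = 0" using per[of k] by (simp add: add.commute)
  finally have "(\<Sum>j<n. A (j + Suc k)) - (\<Sum>j<n. A (j + k)) = 0"
    by (simp add: sum_subtractf)
  with Suc show ?case by simp
qed simp

lemma weight_cols:
  "rdf_weight (gp_vertices n) f = (\<Sum>j<n. f (V j) + f (U j))"
proof -
  have "rdf_weight (gp_vertices n) f = sum f (V ` {0..<n}) + sum f (U ` {0..<n})"
    unfolding rdf_weight_def gp_vertices_def
    by (rule sum.union_disjoint) auto
  also have "\<dots> = (\<Sum>j<n. f (V j)) + (\<Sum>j<n. f (U j))"
    by (simp add: sum.reindex inj_on_def lessThan_atLeast0)
  finally show ?thesis by (simp add: sum.distrib)
qed

lemma key_bound:
  assumes rdf: "is_rdf (gp_vertices n) (gp_adj n 2) f" and n: "n > 0"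
  shows "8 * int n \<le> 7 * int (rdf_weight (gp_vertices n) f)"
proof -
  define a where "a j = f (V (j mod n))" for j
  define b where "b j = f (U (j mod n))" for j
  have a2: "a j \<le> 2" for j using rdf n unfolding is_rdf_def a_def gp_vertices_def by auto
  have b2: "b j \<le> 2" for j using rdf n unfolding is_rdf_def b_def gp_vertices_def by auto
  have aper: "a (j + n) = a j" for j by (simp add: a_def)
  have bper: "b (j + n) = b j" for j by (simp add: b_def)
  have dV: "a (j+1) \<ge> 1 \<or> b (j+1) = 2 \<or> a j = 2 \<or> a (j+2) = 2" for j
    using domV[OF rdf n, of j] by (simp add: a_def b_def)
  have dU: "b (j+2) \<ge> 1 \<or> a (j+2) = 2 \<or> b j = 2 \<or> b (j+4) = 2" for j
    using domU[OF rdf n, of j] by (simp add: a_def b_def)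
  define S1 where "S1 j = stat (b (j+2)) (a (j+2) = 2 \<or> b j = 2)" for j
  define S0 where "S0 j = stat (b (j+3)) (a (j+3) = 2 \<or> b (j+1) = 2)" for j
  define SV where "SV j = stat (a (j+3)) (b (j+3) = 2 \<or> a (j+2) = 2)" for j
  define st where "st j = psi (S1 j) (S0 j) (SV j)" for j
  have step: "st (Suc j) - st j \<le> 7 * (int (a (j+4)) + int (b (j+4))) - 8" for j
  proof -
    have idx: "Suc j + 3 = j + 4" "Suc j + 1 = j + 2" "Suc j + 2 = j + 3" by simp_all
    have e1: "S1 (Suc j) = S0 j" unfolding S1_def S0_def by (simp add: numeral_eq_Suc)
    have e2: "S0 (Suc j) = stat (b (j+4)) (a (j+4) = 2 \<or> S1 j = 2)"
      unfolding S0_def S1_def stat_eq2 idx ..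
    have e3: "SV (Suc j) = stat (a (j+4)) (b (j+4) = 2 \<or> SV j = 2)"
      unfolding SV_def stat_eq2 idx ..
    have i: "j+2+1 = j+3" "j+2+2 = j+4" by simp_all
    have d: "a (j+3) \<ge> 1 \<or> b (j+3) = 2 \<or> a (j+2) = 2 \<or> a (j+4) = 2"
      using dV[of "j+2"] unfolding i .
    have sv: "SV j \<ge> 1 \<longleftrightarrow> a (j+3) \<ge> 1 \<or> b (j+3) = 2 \<or> a (j+2) = 2"
      unfolding SV_def by (rule stat_ge1[OF a2])
    have c1: "SV j \<ge> 1 \<or> a (j+4) = 2" using d sv by blast
    have c2: "S1 j \<ge> 1 \<or> b (j+4) = 2"
      using dU[of j] stat_ge1[OF b2[of "j+2"], of "a (j+2) = 2 \<or> b j = 2"] unfolding S1_def by blast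
    have "psi (S0 j) (stat (b (j+4)) (a (j+4) = 2 \<or> S1 j = 2)) (stat (a (j+4)) (b (j+4) = 2 \<or> SV j = 2))
          - psi (S1 j) (S0 j) (SV j) \<le> 7 * (int (a (j+4)) + int (b (j+4))) - 8"
      by (rule finite_step[OF _ _ _ a2 b2 c1 c2]) (simp_all add: S1_def S0_def SV_def stat_le)
    thus ?thesis by (simp add: st_def e1 e2 e3)
  qed
  have stper: "st n = st 0"
  proof -
    have ap: "a (n + k) = a k" "b (n + k) = b k" for k
      using aper[of k] bper[of k] by (simp_all add: add.commute)
    have a0: "a n = a 0" "b n = b 0" using ap[of 0] by simp_all
    show ?thesis unfolding st_def S1_def S0_def SV_def by (simp only: ap a0 add_0_left)
  qed
  have "0 = (\<Sum>j<n. st (Suc j) - st j)"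
    using stper by (simp add: sum_lessThan_telescope)
  also have "\<dots> \<le> (\<Sum>j<n. 7 * (int (a (j+4)) + int (b (j+4))) - 8)"
    by (rule sum_mono) (rule step)
  also have "\<dots> = 7 * (\<Sum>j<n. int (a (j+4)) + int (b (j+4))) - 8 * int n"
    by (simp add: sum_subtractf sum_distrib_left)
  also have "(\<Sum>j<n. int (a (j+4)) + int (b (j+4))) = (\<Sum>j<n. int (a j) + int (b j))"
    by (rule shift_sum) (simp add: aper bper)
  also have "\<dots> = int (rdf_weight (gp_vertices n) f)"
    by (simp add: weight_cols a_def b_def)
  finally show ?thesis by simp
qed

theorem lemma2p11:
  fixes n :: nat
  assumes "n \<ge> 5"
  shows "gamma_R_GP n 2 \<ge> nat \<lceil>(8 * real n) / 7\<rceil>"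
proof -
  let ?VS = "gp_vertices n"
  define f0 where "f0 x = (if x \<in> ?VS then 1 else 0::nat)" for x
  have "is_rdf ?VS (gp_adj n 2) f0" by (simp add: is_rdf_def f0_def)
  hence ex: "\<exists>w f. is_rdf ?VS (gp_adj n 2) f \<and> rdf_weight ?VS f = w" by blast
  obtain f where f: "is_rdf ?VS (gp_adj n 2) f" "rdf_weight ?VS f = gamma_R_GP n 2"
    using LeastI_ex[OF ex] unfolding gamma_R_GP_def roman_domination_number_def by blast
  have "8 * int n \<le> 7 * int (gamma_R_GP n 2)"
    using key_bound[OF f(1)] assms f(2) by simp
  hence "(8 * real n) / 7 \<le> real (gamma_R_GP n 2)" by linarith
  hence "\<lceil>(8 * real n) / 7\<rceil> \<le> int (gamma_R_GP n 2)"
    by (simp add: ceiling_le_iff)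
  thus ?thesis by (metis nat_int nat_mono)
qed

end
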